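(* There exists a universal constant $c\in(\frac12,1)$ such that for every $d\ge1$, every $\theta\in\mathbb{R}^d$ and every $\varpi\in(0,\frac12]$, with $\rho:=1-2\varpi\in[0,1)$, $$|M_1(\theta,\varpi)-\varpi|\le\frac{(1-c\rho^2)\,\|\theta\|_2}{2}\qquad\text{and}\qquad \|M_2(\theta,\varpi)\|_2\le\Big(1-\frac{\rho^2}{2}\Big)\|\theta\|_2 .$$
   Context: Setting with unknown weight and $\sigma=1$: $X\sim\mathcal N(0,I_d)$. For $\theta,x\in\mathbb{R}^d$ and $\varpi\in(0,1)$, let $w_{\theta,\varpi}(x)=\dfrac{\varpi e^{-\|\theta-x\|_2^2/2}}{\varpi e^{-\|\theta-x\|_2^2/2}+(1-\varpi)e^{-\|\theta+x\|_2^2/2}}$. The population EM operators for the weight and location are $M_1(\theta,\varpi)=\mathbb{E}[w_{\theta,\varpi}(X)]$ and $M_2(\theta,\varpi)=\mathbb{E}[(2w_{\theta,\varpi}(X)-1)X]$. *)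

theory Defs
  imports "HOL-Probability.Probability"
begin

text \<open>Vectors of R^d are represented as functions nat => real, only the
coordinates i < d being relevant.\<close>

definition vnorm :: "nat \<Rightarrow> (nat \<Rightarrow> real) \<Rightarrow> real" where
  "vnorm d v = sqrt (\<Sum>i<d. (v i)\<^sup>2)"

definition gauss :: "nat \<Rightarrow> (nat \<Rightarrow> real) measure" where
  "gauss d = PiM {..<d} (\<lambda>_. density lborel std_normal_density)"

definition wgt :: "nat \<Rightarrow> (nat \<Rightarrow> real) \<Rightarrow> real \<Rightarrow> (nat \<Rightarrow> real) \<Rightarrow> real" where
  "wgt d \<theta> pw x =
     pw * exp (- (vnorm d (\<lambda>i. \<theta> i - x i))\<^sup>2 / 2) /
     (pw * exp (- (vnorm d (\<lambda>i. \<theta> i - x i))\<^sup>2 / 2)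
      + (1 - pw) * exp (- (vnorm d (\<lambda>i. \<theta> i + x i))\<^sup>2 / 2))"

definition M1 :: "nat \<Rightarrow> (nat \<Rightarrow> real) \<Rightarrow> real \<Rightarrow> real" where
  "M1 d \<theta> pw = (\<integral>x. wgt d \<theta> pw x \<partial>gauss d)"

definition M2 :: "nat \<Rightarrow> (nat \<Rightarrow> real) \<Rightarrow> real \<Rightarrow> (nat \<Rightarrow> real)" where
  "M2 d \<theta> pw = (\<lambda>i. if i < d then (\<integral>x. (2 * wgt d \<theta> pw x - 1) * x i \<partial>gauss d) else 0)"

end

theory Submission
  imports Defs
begin

definition sg :: "real \<Rightarrow> real" where "sg u = 1 / (1 + exp (- u))"

lemma sg_pos: "0 < sg u" and sg_lt1: "sg u < 1"
  by (auto simp: sg_def add_pos_pos)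

lemma sg_deriv: "(sg has_real_derivative sg u * (1 - sg u)) (at u)"
proof -
  have "(sg has_real_derivative exp (-u) / (1 + exp (- u))^2) (at u)"
    unfolding sg_def[abs_def]
    by (auto intro!: derivative_eq_intros simp: power2_eq_square add_pos_pos)
       (smt (verit) exp_gt_zero)
  moreover have "exp (-u) / (1 + exp (- u))^2 = sg u * (1 - sg u)"
  proof -
    have p: "1 + exp (-u) > 0" by (smt (verit) exp_gt_zero)
    show ?thesis unfolding sg_def using p by (simp add: divide_simps power2_eq_square)
  qed
  ultimately show ?thesis by simp
qed

lemma sg_mono: "u \<le> v \<Longrightarrow> sg u \<le> sg v"
  unfolding sg_def by (auto intro!: divide_left_mono add_pos_pos mult_pos_pos)

lemma sg_le_exp: "sg u \<le> exp u"
proof -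
  have "1 \<le> exp u * (1 + exp (-u))" by (simp add: distrib_left exp_minus field_simps)
  then show ?thesis unfolding sg_def by (simp add: field_simps add_pos_pos)
qed

lemma sg_logit: assumes "0 < p" "p < 1" shows "sg (ln (p / (1 - p))) = p"
  using assms unfolding sg_def by (simp add: exp_minus field_simps)

lemma sgd_le: "sg u * (1 - sg u) \<le> 1/4"
proof -
  have "sg u * (1 - sg u) = 1/4 - (sg u - 1/2)^2" by (simp add: power2_eq_square algebra_simps)
  then show ?thesis by simp
qed

lemma sg_zero: "sg 0 = 1/2" by (simp add: sg_def)

lemma sg_mvt: assumes "u \<le> v" shows "\<exists>z. u \<le> z \<and> z \<le> v \<and> sg v - sg u = (v - u) * (sg z * (1 - sg z))"
proof (cases "u = v")
  case True then show ?thesis by auto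
next
  case False
  then have "u < v" using assms by simp
  from MVT2[OF this, of sg "\<lambda>z. sg z * (1 - sg z)"] sg_deriv obtain z where
    "u < z" "z < v" "sg v - sg u = (v - u) * (sg z * (1 - sg z))" by blast
  then show ?thesis by (intro exI[of _ z]) auto
qed

lemma sgd_mono: fixes s p :: real assumes "s \<le> p" "p \<le> 1/2" "0 \<le> s" shows "s * (1 - s) \<le> p * (1 - p)"
proof -
  have "p * (1 - p) - s * (1 - s) = (p - s) * (1 - p - s)" by (simp add: algebra_simps)
  also have "\<dots> \<ge> 0" using assms by (intro mult_nonneg_nonneg) auto
  finally show ?thesis by simp
qed

lemma exp_a: "exp a = sg a / (1 - sg a)"
proof -
  have p: "1 + exp (-a) > 0" by (smt (verit) exp_gt_zero)
  show ?thesis unfolding sg_def using p by (simp add: divide_simps exp_minus)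
qed

lemma star:
  fixes a y :: real
  assumes a: "a \<le> 0" and y: "0 \<le> y"
  shows "\<bar>sg (a + y) + sg (a - y) - 2 * sg a\<bar> \<le> (1 - 501/1000 * (1 - 2 * sg a)\<^sup>2) * y / 2"
proof -
  define p where "p = sg a"
  define c :: real where "c = 501/1000"
  have p0: "0 < p" and p1: "p \<le> 1/2" unfolding p_def using sg_pos sg_mono[OF a] sg_zero by auto
  have rho: "0 \<le> 1 - 2 * p" "1 - 2 * p < 1" using p0 p1 by auto
  have rho2: "(1 - 2 * p)\<^sup>2 \<le> 1" using rho by (simp add: power_le_one)
  have K0: "(1 - c) / 2 \<le> (1 - c * (1 - 2 * p)\<^sup>2) / 2" using rho2 by (simp add: c_def)
  obtain z where z: "a - y \<le> z" "z \<le> a" "sg a - sg (a - y) = (a - (a - y)) * (sg z * (1 - sg z))"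
    using sg_mvt[of "a - y" a] y by auto
  have "sg z * (1 - sg z) \<le> p * (1 - p)"
    using sgd_mono[of "sg z" p] sg_mono[OF z(2)] p1 sg_pos[of z] unfolding p_def by auto
  then have L1: "p - sg (a - y) \<le> y * (p * (1 - p))" using z(3) y unfolding p_def
    by (simp add: mult_left_mono)
  have L2: "p * (1 - p) \<le> (1 - c * (1 - 2 * p)\<^sup>2) / 2"
  proof -
    have "p * (1 - p) = (1 - (1 - 2 * p)\<^sup>2) / 4" by (simp add: power2_eq_square algebra_simps)
    also have "\<dots> \<le> (1 - c * (1 - 2 * p)\<^sup>2) / 2" using rho2 by (simp add: c_def)
    finally show ?thesis .
  qed
  have up1: "p \<le> sg (a + y)" unfolding p_def using y by (intro sg_mono) simp
  have low: "- (sg (a + y) + sg (a - y) - 2 * p) \<le> (1 - c * (1 - 2 * p)\<^sup>2) * y / 2"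
  proof -
    have "y * (p * (1 - p)) \<le> y * ((1 - c * (1 - 2 * p)\<^sup>2) / 2)" by (rule mult_left_mono[OF L2 y])
    moreover have "y * ((1 - c * (1 - 2 * p)\<^sup>2) / 2) = (1 - c * (1 - 2 * p)\<^sup>2) * y / 2" by simp
    ultimately show ?thesis using L1 up1 by linarith
  qed
  have dn: "sg (a - y) \<le> p" unfolding p_def using y by (intro sg_mono) simp
  obtain w where w: "a \<le> w" "w \<le> a + y" "sg (a + y) - sg a = ((a + y) - a) * (sg w * (1 - sg w))"
    using sg_mvt[of a "a + y"] y by auto
  have w3: "sg (a + y) - sg a = y * (sg w * (1 - sg w))" using w(3) by simp
  have U: "sg (a + y) - p \<le> (1 - c * (1 - 2 * p)\<^sup>2) * y / 2"
  proof (cases "p \<ge> 1/1000")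
    case True
    have "(1 - 2 * p)\<^sup>2 \<le> (998/1000)\<^sup>2" using True rho by (intro power_mono) auto
    then have "1/4 \<le> (1 - c * (1 - 2 * p)\<^sup>2) / 2" by (simp add: c_def power2_eq_square)
    then have "sg w * (1 - sg w) \<le> (1 - c * (1 - 2 * p)\<^sup>2) / 2" using sgd_le[of w] by linarith
    then have "y * (sg w * (1 - sg w)) \<le> y * ((1 - c * (1 - 2 * p)\<^sup>2) / 2)" by (rule mult_left_mono[OF _ y])
    moreover have "y * ((1 - c * (1 - 2 * p)\<^sup>2) / 2) = (1 - c * (1 - 2 * p)\<^sup>2) * y / 2" by simp
    ultimately show ?thesis using w3 p_def by linarith
  next
    case False
    then have pl: "p < 1/1000" by simp
    show ?thesis
    proof (cases "y \<ge> 5")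
      case True
      have "sg (a + y) - p \<le> 1" using sg_lt1[of "a+y"] p0 by simp
      also have "1 \<le> (1 - c) / 2 * y" using True by (simp add: c_def)
      also have "\<dots> \<le> (1 - c * (1 - 2 * p)\<^sup>2) / 2 * y" using K0 y by (rule mult_right_mono)
      finally show ?thesis by simp
    next
      case False
      have "sg w * (1 - sg w) \<le> sg w" using sg_pos[of w] sg_lt1[of w] by (simp add: mult_left_le)
      also have "\<dots> \<le> sg (a + 5)" using w(2) False by (intro sg_mono) simp
      also have "\<dots> \<le> exp (a + 5)" by (rule sg_le_exp)
      also have "\<dots> = exp a * exp 5" by (simp add: exp_add)
      finally have s1: "sg w * (1 - sg w) \<le> exp a * exp 5" .
      have ea: "exp a \<le> 1/999"
      proof -
        have "exp a = p / (1 - p)" unfolding p_def by (rule exp_a)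
        also have "p / (1 - p) \<le> 1/999"
          using pl p0 by (simp add: divide_simps)
        finally show ?thesis .
      qed
      have e5: "exp (5::real) \<le> 243"
      proof -
        have "exp (5::real) = exp 1 ^ 5" by (simp add: exp_of_nat_mult[symmetric])
        also have "\<dots> \<le> 3 ^ 5" using exp_le by (intro power_mono) auto
        finally show ?thesis by simp
      qed
      have "exp a * exp 5 \<le> 1/999 * 243" using ea e5 by (intro mult_mono) auto
      then have "sg w * (1 - sg w) \<le> (1 - c) / 2"
        using s1 by (simp add: c_def)
      then have "sg w * (1 - sg w) \<le> (1 - c * (1 - 2 * p)\<^sup>2) / 2" using K0 by linarith
      then have "y * (sg w * (1 - sg w)) \<le> y * ((1 - c * (1 - 2 * p)\<^sup>2) / 2)" by (rule mult_left_mono[OF _ y])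
      moreover have "y * ((1 - c * (1 - 2 * p)\<^sup>2) / 2) = (1 - c * (1 - 2 * p)\<^sup>2) * y / 2" by simp
    ultimately show ?thesis using w3 p_def by linarith
    qed
  qed
  have up: "sg (a + y) + sg (a - y) - 2 * p \<le> (1 - c * (1 - 2 * p)\<^sup>2) * y / 2"
    using U dn by simp
  have "\<bar>sg (a + y) + sg (a - y) - 2 * p\<bar> \<le> (1 - c * (1 - 2 * p)\<^sup>2) * y / 2"
    using up low unfolding abs_le_iff by linarith
  then show ?thesis unfolding p_def c_def .
qed




definition NN :: "real measure" where "NN = density lborel (\<lambda>x. ennreal (std_normal_density x))"

lemma gauss_NN: "gauss d = PiM {..<d} (\<lambda>_. NN)" unfolding gauss_def NN_def ..
lemma prob_NN: "prob_space NN" unfolding NN_def by (rule prob_space_normal_density) simp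
lemma sets_NN[measurable_cong, simp]: "sets NN = sets borel" unfolding NN_def by simp
lemma space_NN[simp]: "space NN = UNIV" unfolding NN_def by simp

lemma integral_NN: assumes [measurable]: "f \<in> borel_measurable borel"
  shows "(\<integral>x. f x \<partial>NN) = (\<integral>x. std_normal_density x * f x \<partial>lborel)"
  unfolding NN_def by (subst integral_density) auto

lemma integrable_NN: assumes [measurable]: "f \<in> borel_measurable borel"
  shows "integrable NN f \<longleftrightarrow> integrable lborel (\<lambda>x. std_normal_density x * f x)"
  unfolding NN_def by (subst integrable_density) auto

lemma phi_lim_top: "((\<lambda>x::real. exp (- ((1/2) * x\<^sup>2))) \<longlongrightarrow> 0) at_top"
proof -
  have "LIM x at_top. (1/2) * (x::real)\<^sup>2 :> at_top"
    by (rule filterlim_tendsto_pos_mult_at_top[OF tendsto_const]) (auto intro!: filterlim_pow_at_top filterlim_ident)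
  then have "LIM x at_top. - ((1/2) * (x::real)\<^sup>2) :> at_bot" by (simp only: filterlim_uminus_at_top)
  then show ?thesis by (rule filterlim_compose[OF exp_at_bot])
qed

lemma phi_lim_bot: "((\<lambda>x::real. exp (- ((1/2) * x\<^sup>2))) \<longlongrightarrow> 0) at_bot"
  unfolding filterlim_at_bot_mirror using phi_lim_top by simp

lemmas phi_lim = phi_lim_top phi_lim_bot

lemma phi_deriv: "(std_normal_density has_real_derivative (- x * std_normal_density x)) (at x)"
proof -
  define k where "k = 1 / sqrt (2 * pi)"
  have e: "std_normal_density = (\<lambda>x. k * exp (- x\<^sup>2 / 2))"
    by (rule ext) (simp add: std_normal_density_def k_def)
  have "((\<lambda>x. k * exp (- x\<^sup>2 / 2)) has_real_derivative
          k * (exp (- x\<^sup>2 / 2) * (- (2 * x) / 2))) (at x)"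
    by (auto intro!: derivative_eq_intros)
  then show ?thesis unfolding e by (simp add: algebra_simps)
qed

lemma stein:
  fixes h h' :: "real \<Rightarrow> real" and B :: real
  assumes der: "\<And>x. (h has_real_derivative h' x) (at x)"
    and cont: "continuous_on UNIV h'"
    and bh: "\<And>x. \<bar>h x\<bar> \<le> B" and bh': "\<And>x. \<bar>h' x\<bar> \<le> B"
  shows "(\<integral>y. h y * y \<partial>NN) = (\<integral>y. h' y \<partial>NN)"
proof -
  let ?phi = "std_normal_density"
  have conth: "continuous_on UNIV h"
    using der by (intro continuous_at_imp_continuous_on ballI DERIV_isCont) auto
  have mh[measurable]: "h \<in> borel_measurable borel" using conth by (rule borel_measurable_continuous_onI)
  have mh'[measurable]: "h' \<in> borel_measurable borel" using cont by (rule borel_measurable_continuous_onI)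
  have phi_nn: "\<And>y. 0 \<le> ?phi y" by simp
  have i1: "integrable lborel (\<lambda>y. ?phi y * (h y * y))"
  proof (rule Bochner_Integration.integrable_bound)
    show "integrable lborel (\<lambda>y. B * (?phi y * \<bar>y\<bar> ^ 1))"
      using integrable_std_normal_moment_abs[of 1] by (intro integrable_mult_right)
    show "(\<lambda>y. ?phi y * (h y * y)) \<in> borel_measurable lborel" by measurable
    show "AE y in lborel. norm (?phi y * (h y * y)) \<le> norm (B * (?phi y * \<bar>y\<bar> ^ 1))"
    proof (intro AE_I2)
      fix y
      have "norm (?phi y * (h y * y)) = ?phi y * \<bar>y\<bar> * \<bar>h y\<bar>" by (simp add: abs_mult)
      also have "\<dots> \<le> ?phi y * \<bar>y\<bar> * B" using bh[of y] by (intro mult_left_mono) auto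
      also have "\<dots> \<le> ?phi y * \<bar>y\<bar> * \<bar>B\<bar>" by (intro mult_left_mono) auto
      also have "\<dots> = norm (B * (?phi y * \<bar>y\<bar> ^ 1))" by (simp add: abs_mult)
      finally show "norm (?phi y * (h y * y)) \<le> norm (B * (?phi y * \<bar>y\<bar> ^ 1))" .
    qed
  qed
  have i2: "integrable lborel (\<lambda>y. ?phi y * h' y)"
  proof (rule Bochner_Integration.integrable_bound)
    show "integrable lborel (\<lambda>y. B * ?phi y)"
      by (rule integrable_mult_right, rule integrable_normal_density) simp
    show "(\<lambda>y. ?phi y * h' y) \<in> borel_measurable lborel" by measurable
    show "AE y in lborel. norm (?phi y * h' y) \<le> norm (B * ?phi y)"
    proof (intro AE_I2)
      fix y
      have "norm (?phi y * h' y) = ?phi y * \<bar>h' y\<bar>" by (simp add: abs_mult)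
      also have "\<dots> \<le> ?phi y * B" using bh'[of y] by (intro mult_left_mono) auto
      also have "\<dots> \<le> ?phi y * \<bar>B\<bar>" by (intro mult_left_mono) auto
      also have "\<dots> = norm (B * ?phi y)" by (simp add: abs_mult)
      finally show "norm (?phi y * h' y) \<le> norm (B * ?phi y)" .
    qed
  qed
  define F where "F y = - h y * ?phi y" for y
  define f where "f y = ?phi y * (h y * y) - ?phi y * h' y" for y
  have intf: "integrable lborel f" unfolding f_def using i1 i2 by auto
  have derF: "(F has_vector_derivative f x) (at x)" for x
  proof -
    have "(F has_real_derivative f x) (at x)"
      unfolding F_def[abs_def] f_def
      by (rule derivative_eq_intros der phi_deriv refl)+ (simp add: algebra_simps)
    then show ?thesis by (simp add: has_real_derivative_iff_has_vector_derivative)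
  qed
  have contf: "isCont f x" for x
  proof -
    have "isCont h x" "isCont h' x" using conth cont by (auto simp: continuous_on_eq_continuous_at)
    then show ?thesis unfolding f_def std_normal_density_def by (intro continuous_intros) auto
  qed
  have Flim: "(F \<longlongrightarrow> 0) at_top" "(F \<longlongrightarrow> 0) at_bot"
  proof -
    have bnd: "norm (F y) \<le> B * (1 / sqrt (2 * pi)) * exp (- ((1/2) * y\<^sup>2))" for y
    proof -
      have "norm (F y) = \<bar>h y\<bar> * ?phi y" unfolding F_def by (simp add: abs_mult)
      also have "\<dots> \<le> B * ?phi y" using bh[of y] by (intro mult_right_mono) auto
      finally show ?thesis by (simp add: std_normal_density_def)
    qed
    show "(F \<longlongrightarrow> 0) at_top"
      by (rule Lim_null_comparison[OF always_eventually[OF allI[OF bnd]]])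
         (intro tendsto_mult_right_zero phi_lim)
    show "(F \<longlongrightarrow> 0) at_bot"
      by (rule Lim_null_comparison[OF always_eventually[OF allI[OF bnd]]])
         (intro tendsto_mult_right_zero phi_lim)
  qed
  have "(LBINT x=-\<infinity>..\<infinity>. f x) = 0 - 0"
  proof (rule interval_integral_FTC_integrable)
    show "set_integrable lborel (einterval (-\<infinity>) \<infinity>) f"
      using intf by (simp add: set_integrable_def einterval_def)
  qed (use derF contf Flim in \<open>auto simp: ereal_tendsto_simps\<close>)
  then have "(\<integral>x. f x \<partial>lborel) = 0"
    by (simp add: interval_lebesgue_integral_def set_lebesgue_integral_def einterval_def)
  then have "(\<integral>y. ?phi y * (h y * y) \<partial>lborel) = (\<integral>y. ?phi y * h' y \<partial>lborel)"
    unfolding f_def using i1 i2 by simp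
  then show ?thesis by (simp add: integral_NN)
qed




definition sdot :: "nat \<Rightarrow> (nat \<Rightarrow> real) \<Rightarrow> (nat \<Rightarrow> real) \<Rightarrow> real" where
  "sdot d \<theta> x = (\<Sum>j<d. \<theta> j * x j)"

lemma pps: "product_prob_space (\<lambda>_::nat. NN)"
  by (rule product_prob_spaceI) (rule prob_NN)

lemma prob_gauss: "prob_space (gauss d)"
  unfolding gauss_NN by (rule prob_space_PiM) (rule prob_NN)

lemma sdot_meas[measurable]: "sdot d \<theta> \<in> borel_measurable (PiM {..<d} (\<lambda>_. NN))"
  unfolding sdot_def[abs_def] by measurable

lemma wgt_eq:
  assumes "0 < pw" "pw < 1"
  shows "wgt d \<theta> pw x = sg (2 * sdot d \<theta> x + ln (pw / (1 - pw)))"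
proof -
  define A where "A = (\<Sum>i<d. (\<theta> i - x i)\<^sup>2)"
  define S where "S = sdot d \<theta> x"
  have vA: "(vnorm d (\<lambda>i. \<theta> i - x i))\<^sup>2 = A" unfolding vnorm_def A_def by (simp add: sum_nonneg)
  have "(\<Sum>i<d. (\<theta> i + x i)\<^sup>2) - A = (\<Sum>i<d. 4 * (\<theta> i * x i))"
    unfolding A_def sum_subtractf[symmetric] by (intro sum.cong) (auto simp: power2_eq_square algebra_simps)
  then have "(\<Sum>i<d. (\<theta> i + x i)\<^sup>2) = A + 4 * S" unfolding S_def sdot_def sum_distrib_left by simp
  moreover have "(vnorm d (\<lambda>i. \<theta> i + x i))\<^sup>2 = (\<Sum>i<d. (\<theta> i + x i)\<^sup>2)" unfolding vnorm_def by (simp add: sum_nonneg)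
  ultimately have vB: "(vnorm d (\<lambda>i. \<theta> i + x i))\<^sup>2 = A + 4 * S" by simp
  have eB: "exp (- (A + 4 * S) / 2) = exp (- A / 2) * exp (- (2 * S))"
    by (simp add: exp_add[symmetric] field_simps)
  have el: "exp (- (2 * S + ln (pw / (1 - pw)))) = exp (- (2 * S)) * ((1 - pw) / pw)"
    using assms by (simp add: exp_diff exp_minus exp_ln)
  have "wgt d \<theta> pw x = pw * exp (- A / 2) / (pw * exp (- A / 2) + (1 - pw) * (exp (- A / 2) * exp (- (2 * S))))"
    unfolding wgt_def vA vB eB ..
  also have "\<dots> = 1 / (1 + exp (- (2 * S)) * ((1 - pw) / pw))"
  proof -
    define E where "E = exp (- A / 2)"
    define e where "e = exp (- (2 * S))"
    have E: "E > 0" "e > 0" unfolding E_def e_def by auto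
    have "pw * E + (1 - pw) * (E * e) = E * (pw + (1 - pw) * e)" by (simp add: algebra_simps)
    then have 1: "pw * E / (pw * E + (1 - pw) * (E * e)) = pw / (pw + (1 - pw) * e)" using E by simp
    have 2: "1 / (1 + e * ((1 - pw) / pw)) = pw / (pw + (1 - pw) * e)" using assms E by (simp add: field_simps)
    show ?thesis using 1 2 unfolding E_def e_def by simp
  qed
  also have "\<dots> = sg (2 * sdot d \<theta> x + ln (pw / (1 - pw)))"
    unfolding sg_def using el unfolding S_def by simp
  finally show ?thesis .
qed

lemma NN_sym: "distr NN NN uminus = NN"
proof -
  have "distr NN NN uminus = distr NN borel uminus" by (rule distr_cong) auto
  also have "\<dots> = density (distr lborel borel uminus) (\<lambda>x. ennreal (std_normal_density x))"
    unfolding NN_def by (subst density_distr) (auto simp: normal_density_def)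
  also have "\<dots> = NN" unfolding lborel_distr_uminus NN_def ..
  finally show ?thesis .
qed

definition negv :: "nat \<Rightarrow> (nat \<Rightarrow> real) \<Rightarrow> (nat \<Rightarrow> real)" where
  "negv d = compose {..<d} uminus"

lemma negv_meas[measurable]: "negv d \<in> measurable (gauss d) (gauss d)"
  unfolding negv_def compose_def gauss_NN by measurable

lemma gauss_sym: "distr (gauss d) (gauss d) (negv d) = gauss d"
proof -
  have "distr (gauss d) (gauss d) (negv d) = PiM {..<d} (\<lambda>i. distr NN NN uminus)"
    unfolding gauss_NN negv_def
    by (rule distr_PiM_finite_prob_space') (auto intro: prob_NN)
  then show ?thesis unfolding NN_sym gauss_NN by simp
qed

lemma integral_sym:
  fixes f :: "(nat \<Rightarrow> real) \<Rightarrow> real"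
  assumes [measurable]: "f \<in> borel_measurable (gauss d)"
  shows "(\<integral>x. f x \<partial>gauss d) = (\<integral>x. f (negv d x) \<partial>gauss d)"
proof -
  have "(\<integral>x. f x \<partial>gauss d) = (\<integral>x. f x \<partial>distr (gauss d) (gauss d) (negv d))" unfolding gauss_sym ..
  also have "\<dots> = (\<integral>x. f (negv d x) \<partial>gauss d)" by (rule integral_distr) auto
  finally show ?thesis .
qed

lemma sdot_negv: "sdot d \<theta> (negv d x) = - sdot d \<theta> x"
  unfolding sdot_def negv_def compose_def by (simp add: sum_negf[symmetric])




lemma integrable_NN_id: "integrable NN (\<lambda>y. y)"
  using integrable_std_normal_moment[of 1] by (subst integrable_NN) auto

lemma integrable_coord:
  assumes i: "i < d"
  shows "integrable (gauss d) (\<lambda>x. x i)"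
proof -
  interpret P: product_prob_space "\<lambda>_::nat. NN" by (rule pps)
  interpret N: prob_space NN by (rule prob_NN)
  have A: "integrable (PiM {..<d} (\<lambda>_. NN)) (\<lambda>x. \<Prod>j\<in>{..<d}. (\<lambda>y. if j = i then y else 1) (x j))"
  proof (rule P.product_integrable_prod)
    fix j show "integrable NN (\<lambda>y. if j = i then y else 1)"
      using integrable_NN_id by (cases "j = i") auto
  qed simp
  have E: "(\<lambda>x. \<Prod>j\<in>{..<d}. (\<lambda>y. if j = i then y else 1) (x j)) = (\<lambda>x. x i)"
    using i by (auto simp: fun_eq_iff)
  show ?thesis using A unfolding E gauss_NN .
qed

lemma coord_stein:
  fixes g g' :: "real \<Rightarrow> real" and B :: real
  assumes der: "\<And>s. (g has_real_derivative g' s) (at s)"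
    and cont: "continuous_on UNIV g'"
    and bg: "\<And>s. \<bar>g s\<bar> \<le> B" and bg': "\<And>s. \<bar>g' s\<bar> \<le> B"
    and i: "i < d"
  shows "(\<integral>x. g (sdot d \<theta> x) * x i \<partial>gauss d) = \<theta> i * (\<integral>x. g' (sdot d \<theta> x) \<partial>gauss d)"
proof -
  interpret P: product_prob_space "\<lambda>_::nat. NN" by (rule pps)
  interpret G: prob_space "gauss d" by (rule prob_gauss)
  define J where "J = {..<d} - {i}"
  have IJ: "{..<d} = insert i J" "i \<notin> J" "finite J" using i by (auto simp: J_def)
  define c where "c x = (\<Sum>j\<in>J. \<theta> j * x j)" for x
  have sd: "sdot d \<theta> (x(i:=y)) = c x + \<theta> i * y" for x y
  proof -
    have "sdot d \<theta> (x(i:=y)) = \<theta> i * y + (\<Sum>j\<in>J. \<theta> j * (x(i:=y)) j)"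
      unfolding sdot_def IJ(1) using IJ(2,3) by simp
    also have "(\<Sum>j\<in>J. \<theta> j * (x(i:=y)) j) = c x" unfolding c_def using IJ(2) by (intro sum.cong) auto
    finally show ?thesis by linarith
  qed
  have B0: "0 \<le> B" using bg[of 0] by simp
  have conth: "continuous_on UNIV g"
    using der by (intro continuous_at_imp_continuous_on ballI DERIV_isCont) auto
  have mg[measurable]: "g \<in> borel_measurable borel" using conth by (rule borel_measurable_continuous_onI)
  have mg'[measurable]: "g' \<in> borel_measurable borel" using cont by (rule borel_measurable_continuous_onI)
  have G: "gauss d = PiM (insert i J) (\<lambda>_. NN)" unfolding gauss_NN IJ(1) ..
  have ms[measurable]: "sdot d \<theta> \<in> borel_measurable (gauss d)" unfolding gauss_NN by (rule sdot_meas)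
  have int1: "integrable (gauss d) (\<lambda>x. g (sdot d \<theta> x) * x i)"
  proof (rule Bochner_Integration.integrable_bound)
    show "integrable (gauss d) (\<lambda>x. B * x i)" using integrable_coord[OF i] by (rule integrable_mult_right)
    show "(\<lambda>x. g (sdot d \<theta> x) * x i) \<in> borel_measurable (gauss d)"
      using integrable_coord[OF i] by (intro borel_measurable_times measurable_compose[OF ms mg]) auto
    show "AE x in gauss d. norm (g (sdot d \<theta> x) * x i) \<le> norm (B * x i)"
    proof (intro AE_I2)
      fix x
      have "norm (g (sdot d \<theta> x) * x i) = \<bar>g (sdot d \<theta> x)\<bar> * \<bar>x i\<bar>" by (simp add: abs_mult)
      also have "\<dots> \<le> B * \<bar>x i\<bar>" using bg by (intro mult_right_mono) auto
      also have "\<dots> = norm (B * x i)" using B0 by (simp add: abs_mult)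
      finally show "norm (g (sdot d \<theta> x) * x i) \<le> norm (B * x i)" .
    qed
  qed
  have int2: "integrable (gauss d) (\<lambda>x. g' (sdot d \<theta> x))"
    by (rule G.integrable_const_bound[where B=B]) (auto intro: bg')
  have inner: "(\<integral>y. g (c x + \<theta> i * y) * y \<partial>NN) = \<theta> i * (\<integral>y. g' (c x + \<theta> i * y) \<partial>NN)" for x
  proof -
    have "(\<integral>y. g (c x + \<theta> i * y) * y \<partial>NN) = (\<integral>y. \<theta> i * g' (c x + \<theta> i * y) \<partial>NN)"
    proof (rule stein[where B = "B * (1 + \<bar>\<theta> i\<bar>)"])
      fix y
      have "((\<lambda>y. c x + \<theta> i * y) has_real_derivative \<theta> i) (at y)"
        by (auto intro!: derivative_eq_intros)
      from DERIV_chain2[OF der this]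
      show "((\<lambda>y. g (c x + \<theta> i * y)) has_real_derivative \<theta> i * g' (c x + \<theta> i * y)) (at y)"
        by (simp add: mult.commute)
      show "\<bar>g (c x + \<theta> i * y)\<bar> \<le> B * (1 + \<bar>\<theta> i\<bar>)"
      proof -
        have "B * 1 \<le> B * (1 + \<bar>\<theta> i\<bar>)" using B0 by (intro mult_left_mono) auto
        then show ?thesis using bg[of "c x + \<theta> i * y"] by linarith
      qed
      have "\<bar>\<theta> i * g' (c x + \<theta> i * y)\<bar> = \<bar>\<theta> i\<bar> * \<bar>g' (c x + \<theta> i * y)\<bar>" by (simp add: abs_mult)
      also have "\<dots> \<le> \<bar>\<theta> i\<bar> * B" using bg' by (intro mult_left_mono) auto
      also have "\<dots> \<le> B * (1 + \<bar>\<theta> i\<bar>)" using B0 by (simp add: algebra_simps)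
      finally show "\<bar>\<theta> i * g' (c x + \<theta> i * y)\<bar> \<le> B * (1 + \<bar>\<theta> i\<bar>)" .
    next
      show "continuous_on UNIV (\<lambda>y. \<theta> i * g' (c x + \<theta> i * y))"
        by (intro continuous_intros continuous_on_compose2[OF cont]) auto
    qed
    then show ?thesis by simp
  qed
  have "(\<integral>x. g (sdot d \<theta> x) * x i \<partial>gauss d) =
        (\<integral>x. (\<integral>y. g (sdot d \<theta> (x(i:=y))) * (x(i:=y)) i \<partial>NN) \<partial>PiM J (\<lambda>_. NN))"
    using int1 unfolding G by (rule P.product_integral_insert[OF IJ(3,2)])
  also have "\<dots> = (\<integral>x. \<theta> i * (\<integral>y. g' (c x + \<theta> i * y) \<partial>NN) \<partial>PiM J (\<lambda>_. NN))"
    by (intro Bochner_Integration.integral_cong refl) (simp add: sd inner)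
  also have "\<dots> = \<theta> i * (\<integral>x. (\<integral>y. g' (sdot d \<theta> (x(i:=y))) \<partial>NN) \<partial>PiM J (\<lambda>_. NN))"
    by (simp add: sd)
  also have "(\<integral>x. (\<integral>y. g' (sdot d \<theta> (x(i:=y))) \<partial>NN) \<partial>PiM J (\<lambda>_. NN)) = (\<integral>x. g' (sdot d \<theta> x) \<partial>gauss d)"
    using int2 unfolding G by (rule P.product_integral_insert[OF IJ(3,2), symmetric])
  finally show ?thesis .
qed




lemma integral_NN_sq: "(\<integral>y. y * y \<partial>NN) = 1"
  using integral_std_normal_moment_even[of 1] by (subst integral_NN) (auto simp: power2_eq_square)

lemma integral_NN_id: "(\<integral>y. y \<partial>NN) = 0"
  using integral_std_normal_moment_odd[of 0] by (subst integral_NN) auto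

lemma integrable_NN_sq: "integrable NN (\<lambda>y. y * y)"
  using integrable_std_normal_moment[of 2] by (subst integrable_NN) (auto simp: power2_eq_square)

lemma cross_moment:
  assumes j: "j < d" and k: "k < d"
  shows "integrable (gauss d) (\<lambda>x. x j * x k) \<and> (\<integral>x. x j * x k \<partial>gauss d) = (if j = k then 1 else 0)"
proof -
  interpret P: product_prob_space "\<lambda>_::nat. NN" by (rule pps)
  interpret N: prob_space NN by (rule prob_NN)
  define f where "f l y = (if l = j then y else 1) * (if l = k then y else (1::real))" for l y
  have intf: "integrable NN (f l)" for l
    unfolding f_def using integrable_NN_id integrable_NN_sq by (cases "l = j"; cases "l = k") auto
  have E: "(\<lambda>x. \<Prod>l\<in>{..<d}. f l (x l)) = (\<lambda>x. x j * x k)"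
    using j k by (auto simp: fun_eq_iff f_def prod.distrib)
  have A: "integrable (PiM {..<d} (\<lambda>_. NN)) (\<lambda>x. \<Prod>l\<in>{..<d}. f l (x l))"
    by (rule P.product_integrable_prod) (auto intro: intf)
  have B: "(\<integral>x. (\<Prod>l\<in>{..<d}. f l (x l)) \<partial>PiM {..<d} (\<lambda>_. NN)) = (\<Prod>l\<in>{..<d}. integral\<^sup>L NN (f l))"
    by (rule P.product_integral_prod) (auto intro: intf)
  have I: "integral\<^sup>L NN (f l) = (if l = j \<and> l = k then 1 else if l = j \<or> l = k then 0 else 1)" for l
    unfolding f_def using integral_NN_id integral_NN_sq P.M.prob_space by (cases "l = j"; cases "l = k") auto
  have "(\<Prod>l\<in>{..<d}. integral\<^sup>L NN (f l)) = (if j = k then 1 else 0)"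
  proof (cases "j = k")
    case True
    then show ?thesis unfolding I by (auto intro!: prod.neutral)
  next
    case False
    have "integral\<^sup>L NN (f j) = 0" unfolding I using False by simp
    then have "(\<Prod>l\<in>{..<d}. integral\<^sup>L NN (f l)) = 0" using j by (intro prod_zero) auto
    then show ?thesis using False by simp
  qed
  then show ?thesis using A B unfolding E gauss_NN by simp
qed

lemma second_moment:
  shows "integrable (gauss d) (\<lambda>x. (sdot d \<theta> x)\<^sup>2)" and "(\<integral>x. (sdot d \<theta> x)\<^sup>2 \<partial>gauss d) = (\<Sum>j<d. (\<theta> j)\<^sup>2)"
proof -
  have e: "(sdot d \<theta> x)\<^sup>2 = (\<Sum>j<d. \<Sum>k<d. \<theta> j * \<theta> k * (x j * x k))" for x
    unfolding sdot_def power2_eq_square sum_product by (intro sum.cong refl) (simp add: algebra_simps)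
  have int: "integrable (gauss d) (\<lambda>x. \<theta> j * \<theta> k * (x j * x k))" if "j < d" "k < d" for j k
    using cross_moment[OF that] by auto
  show "integrable (gauss d) (\<lambda>x. (sdot d \<theta> x)\<^sup>2)" unfolding e
    by (intro Bochner_Integration.integrable_sum int) (auto simp del: integrable_mult_right_iff)
  have "(\<integral>x. (sdot d \<theta> x)\<^sup>2 \<partial>gauss d) = (\<integral>x. (\<Sum>j<d. \<Sum>k<d. \<theta> j * \<theta> k * (x j * x k)) \<partial>gauss d)"
    unfolding e ..
  also have "\<dots> = (\<Sum>j<d. \<integral>x. (\<Sum>k<d. \<theta> j * \<theta> k * (x j * x k)) \<partial>gauss d)"
  proof (rule Bochner_Integration.integral_sum)
    fix j assume "j \<in> {..<d}"
    then show "integrable (gauss d) (\<lambda>x. \<Sum>k<d. \<theta> j * \<theta> k * (x j * x k))"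
      by (intro Bochner_Integration.integrable_sum int) auto
  qed
  also have "\<dots> = (\<Sum>j<d. \<Sum>k<d. \<integral>x. \<theta> j * \<theta> k * (x j * x k) \<partial>gauss d)"
  proof (intro sum.cong refl Bochner_Integration.integral_sum)
    fix j k assume "j \<in> {..<d}" "k \<in> {..<d}"
    then show "integrable (gauss d) (\<lambda>x. \<theta> j * \<theta> k * (x j * x k))" by (intro int) auto
  qed
  also have "\<dots> = (\<Sum>j<d. \<Sum>k<d. \<theta> j * \<theta> k * (\<integral>x. x j * x k \<partial>gauss d))"
    by simp
  also have "\<dots> = (\<Sum>j<d. \<Sum>k<d. \<theta> j * \<theta> k * (if j = k then 1 else 0))"
    using cross_moment by (intro sum.cong refl) auto
  also have "\<dots> = (\<Sum>j<d. (\<theta> j)\<^sup>2)"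
    by (intro sum.cong refl) (simp add: power2_eq_square if_distrib cong: if_cong)
  finally show "(\<integral>x. (sdot d \<theta> x)\<^sup>2 \<partial>gauss d) = (\<Sum>j<d. (\<theta> j)\<^sup>2)" .
qed

lemma half_prob:
  shows "1/2 \<le> (\<integral>x. (if sdot d \<theta> x \<le> 0 then 1 else 0::real) \<partial>gauss d)"
proof -
  interpret G: prob_space "gauss d" by (rule prob_gauss)
  have ms[measurable]: "sdot d \<theta> \<in> borel_measurable (gauss d)" unfolding gauss_NN by (rule sdot_meas)
  let ?P = "\<lambda>x. (if sdot d \<theta> x \<le> 0 then 1 else 0::real)"
  let ?Q = "\<lambda>x. (if sdot d \<theta> x \<ge> 0 then 1 else 0::real)"
  have iP: "integrable (gauss d) ?P" by (rule G.integrable_const_bound[where B=1]) auto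
  have iQ: "integrable (gauss d) ?Q" by (rule G.integrable_const_bound[where B=1]) auto
  have "(\<integral>x. ?P x \<partial>gauss d) = (\<integral>x. ?P (negv d x) \<partial>gauss d)" by (rule integral_sym) measurable
  also have "\<dots> = (\<integral>x. ?Q x \<partial>gauss d)" by (simp add: sdot_negv)
  finally have PQ: "(\<integral>x. ?P x \<partial>gauss d) = (\<integral>x. ?Q x \<partial>gauss d)" .
  have "(1::real) = (\<integral>x. 1 \<partial>gauss d)" using G.prob_space by simp
  also have "\<dots> \<le> (\<integral>x. ?P x + ?Q x \<partial>gauss d)"
    by (intro integral_mono Bochner_Integration.integrable_add iP iQ) auto
  also have "\<dots> = (\<integral>x. ?P x \<partial>gauss d) + (\<integral>x. ?Q x \<partial>gauss d)"
    by (rule Bochner_Integration.integral_add[OF iP iQ])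
  finally show ?thesis using PQ by simp
qed




lemma sg_cont: "continuous_on UNIV sg"
  using sg_deriv by (intro continuous_at_imp_continuous_on ballI DERIV_isCont) auto

lemma sg_meas[measurable]: "sg \<in> borel_measurable borel"
  by (rule borel_measurable_continuous_onI[OF sg_cont])

lemma star_abs:
  assumes a: "a \<le> 0"
  shows "\<bar>sg (a + y) + sg (a - y) - 2 * sg a\<bar> \<le> (1 - 501/1000 * (1 - 2 * sg a)\<^sup>2) * \<bar>y\<bar> / 2"
proof (cases "y \<ge> 0")
  case True then show ?thesis using star[OF a True] by simp
next
  case False
  then have "0 \<le> - y" by simp
  from star[OF a this] show ?thesis using False by (simp add: add.commute)
qed

lemma abs_amgm:
  fixes s t :: real assumes "0 < t"
  shows "\<bar>s\<bar> \<le> (s\<^sup>2 / t + t) / 2"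
proof -
  have "0 \<le> (\<bar>s\<bar> - t)\<^sup>2" by simp
  then have "2 * t * \<bar>s\<bar> \<le> s\<^sup>2 + t\<^sup>2" by (simp add: power2_eq_square algebra_simps)
  then have "\<bar>s\<bar> \<le> (s\<^sup>2 + t\<^sup>2) / (2 * t)" using assms by (simp add: field_simps)
  also have "(s\<^sup>2 + t\<^sup>2) / (2 * t) = (s\<^sup>2 / t + t) / 2" using assms by (simp add: field_simps power2_eq_square)
  finally show ?thesis .
qed

lemma M1_bound:
  assumes pw: "0 < pw" "pw \<le> 1/2"
  shows "\<bar>M1 d \<theta> pw - pw\<bar> \<le> (1 - 501/1000 * (1 - 2 * pw)\<^sup>2) * vnorm d \<theta> / 2"
proof -
  interpret G: prob_space "gauss d" by (rule prob_gauss)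
  have ms[measurable]: "sdot d \<theta> \<in> borel_measurable (gauss d)" unfolding gauss_NN by (rule sdot_meas)
  define a where "a = ln (pw / (1 - pw))"
  have sga: "sg a = pw" unfolding a_def using pw by (intro sg_logit) auto
  have a0: "a \<le> 0" unfolding a_def using pw by (subst ln_le_zero_iff) (auto simp: divide_simps)
  define K where "K = 1 - 501/1000 * (1 - 2 * pw)\<^sup>2"
  have rho2: "(1 - 2 * pw)\<^sup>2 \<le> 1" using pw by (intro power_le_one) auto
  have K0: "0 \<le> K" unfolding K_def using rho2 by simp
  define t where "t = vnorm d \<theta>"
  have t0: "0 \<le> t" unfolding t_def vnorm_def by (simp add: sum_nonneg)
  have t2: "t\<^sup>2 = (\<Sum>j<d. (\<theta> j)\<^sup>2)" unfolding t_def vnorm_def by (simp add: sum_nonneg)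
  have W: "wgt d \<theta> pw x = sg (2 * sdot d \<theta> x + a)" for x unfolding a_def using pw by (intro wgt_eq) auto
  have M1e: "M1 d \<theta> pw = (\<integral>x. sg (2 * sdot d \<theta> x + a) \<partial>gauss d)" unfolding M1_def W ..
  have bsg: "\<bar>sg u\<bar> \<le> 1" for u using sg_pos[of u] sg_lt1[of u] by simp
  have i1: "integrable (gauss d) (\<lambda>x. sg (2 * sdot d \<theta> x + a))"
    by (rule G.integrable_const_bound[where B=1]) (auto intro: bsg)
  have i2: "integrable (gauss d) (\<lambda>x. sg (a - 2 * sdot d \<theta> x))"
    by (rule G.integrable_const_bound[where B=1]) (auto intro: bsg)
  have sym: "(\<integral>x. sg (2 * sdot d \<theta> x + a) \<partial>gauss d) = (\<integral>x. sg (a - 2 * sdot d \<theta> x) \<partial>gauss d)"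
  proof -
    have "(\<integral>x. sg (2 * sdot d \<theta> x + a) \<partial>gauss d) = (\<integral>x. sg (2 * sdot d \<theta> (negv d x) + a) \<partial>gauss d)"
      by (rule integral_sym) measurable
    also have "\<dots> = (\<integral>x. sg (a - 2 * sdot d \<theta> x) \<partial>gauss d)" by (simp add: sdot_negv)
    finally show ?thesis .
  qed
  define h where "h x = sg (a + 2 * sdot d \<theta> x) + sg (a - 2 * sdot d \<theta> x) - 2 * pw" for x
  have ih: "integrable (gauss d) h" unfolding h_def using i1 i2 by (auto simp: add.commute)
  have "(\<integral>x. h x \<partial>gauss d) = (\<integral>x. sg (2 * sdot d \<theta> x + a) \<partial>gauss d) + (\<integral>x. sg (a - 2 * sdot d \<theta> x) \<partial>gauss d) - 2 * pw"
    unfolding h_def using i1 i2 G.prob_space by (simp add: add.commute)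
  then have Mh: "2 * (M1 d \<theta> pw - pw) = (\<integral>x. h x \<partial>gauss d)" unfolding M1e sym by simp
  have hb: "\<bar>h x\<bar> \<le> K * \<bar>sdot d \<theta> x\<bar>" for x
  proof -
    have "\<bar>h x\<bar> \<le> K * \<bar>2 * sdot d \<theta> x\<bar> / 2" unfolding h_def K_def using star_abs[OF a0, of "2 * sdot d \<theta> x"] sga by simp
    then show ?thesis by (simp add: abs_mult)
  qed
  show ?thesis
  proof (cases "t = 0")
    case True
    then have "(\<Sum>j<d. (\<theta> j)\<^sup>2) = 0" using t2 by simp
    then have "\<forall>j\<in>{..<d}. (\<theta> j)\<^sup>2 = 0" by (subst sum_nonneg_eq_0_iff[symmetric]) auto
    then have "sdot d \<theta> x = 0" for x unfolding sdot_def by simp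
    then have "h x = 0" for x unfolding h_def using sga by simp
    then have "M1 d \<theta> pw - pw = 0" using Mh by simp
    then show ?thesis using True unfolding t_def by simp
  next
    case False
    then have tp: "0 < t" using t0 by simp
    have i3: "integrable (gauss d) (\<lambda>x. K * ((sdot d \<theta> x)\<^sup>2 / t + t) / 2)"
      using second_moment(1)[of d \<theta>] by auto
    have "\<bar>2 * (M1 d \<theta> pw - pw)\<bar> \<le> (\<integral>x. \<bar>h x\<bar> \<partial>gauss d)"
      unfolding Mh using integral_norm_bound[of "gauss d" h] by simp
    also have "\<dots> \<le> (\<integral>x. K * ((sdot d \<theta> x)\<^sup>2 / t + t) / 2 \<partial>gauss d)"
    proof (rule integral_mono)
      show "integrable (gauss d) (\<lambda>x. \<bar>h x\<bar>)" using ih by auto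
      show "integrable (gauss d) (\<lambda>x. K * ((sdot d \<theta> x)\<^sup>2 / t + t) / 2)" by (rule i3)
      fix x
      have "\<bar>h x\<bar> \<le> K * \<bar>sdot d \<theta> x\<bar>" by (rule hb)
      also have "\<dots> \<le> K * (((sdot d \<theta> x)\<^sup>2 / t + t) / 2)" using abs_amgm[OF tp] K0 by (intro mult_left_mono) auto
      finally show "\<bar>h x\<bar> \<le> K * ((sdot d \<theta> x)\<^sup>2 / t + t) / 2" by simp
    qed
    also have "\<dots> = K * ((\<integral>x. (sdot d \<theta> x)\<^sup>2 \<partial>gauss d) / t + t) / 2"
      using second_moment(1)[of d \<theta>] G.prob_space by simp
    also have "\<dots> = K * t"
      unfolding second_moment(2) t2[symmetric] using tp by (simp add: power2_eq_square)
    finally have "\<bar>2 * (M1 d \<theta> pw - pw)\<bar> \<le> K * t" .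
    moreover have "\<bar>2 * (M1 d \<theta> pw - pw)\<bar> = 2 * \<bar>M1 d \<theta> pw - pw\<bar>" by (simp only: abs_mult)
    ultimately have "2 * \<bar>M1 d \<theta> pw - pw\<bar> \<le> K * t" by simp
    then have "\<bar>M1 d \<theta> pw - pw\<bar> \<le> K * t / 2" by (simp add: field_simps)
    then show ?thesis unfolding K_def t_def .
  qed
qed




lemma M2_bound:
  assumes pw: "0 < pw" "pw \<le> 1/2"
  shows "vnorm d (M2 d \<theta> pw) \<le> (1 - (1 - 2 * pw)\<^sup>2 / 2) * vnorm d \<theta>"
proof -
  interpret G: prob_space "gauss d" by (rule prob_gauss)
  have ms[measurable]: "sdot d \<theta> \<in> borel_measurable (gauss d)" unfolding gauss_NN by (rule sdot_meas)
  define a where "a = ln (pw / (1 - pw))"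
  have sga: "sg a = pw" unfolding a_def using pw by (intro sg_logit) auto
  have a0: "a \<le> 0" unfolding a_def using pw by (subst ln_le_zero_iff) (auto simp: divide_simps)
  have W: "wgt d \<theta> pw x = sg (2 * sdot d \<theta> x + a)" for x unfolding a_def using pw by (intro wgt_eq) auto
  define t where "t = vnorm d \<theta>"
  have t0: "0 \<le> t" unfolding t_def vnorm_def by (simp add: sum_nonneg)
  define g where "g s = 2 * sg (2 * s + a) - 1" for s
  define g' where "g' s = 4 * (sg (2 * s + a) * (1 - sg (2 * s + a)))" for s
  have der: "(g has_real_derivative g' s) (at s)" for s
  proof -
    have "((\<lambda>s. 2 * s + a) has_real_derivative 2) (at s)" by (auto intro!: derivative_eq_intros)
    from DERIV_chain2[OF sg_deriv this]
    have "((\<lambda>s. sg (2 * s + a)) has_real_derivative sg (2 * s + a) * (1 - sg (2 * s + a)) * 2) (at s)" .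
    from DERIV_diff[OF DERIV_cmult[OF this, of 2] DERIV_const[of 1]]
    have "((\<lambda>s. 2 * sg (2 * s + a) - 1) has_real_derivative 2 * (sg (2 * s + a) * (1 - sg (2 * s + a)) * 2) - 0) (at s)" .
    then show ?thesis unfolding g_def[abs_def] g'_def by (simp add: algebra_simps)
  qed
  have cont: "continuous_on UNIV g'"
    unfolding g'_def[abs_def] by (intro continuous_intros continuous_on_compose2[OF sg_cont]) auto
  have bg: "\<bar>g s\<bar> \<le> 1" for s unfolding g_def using sg_pos[of "2 * s + a"] sg_lt1[of "2 * s + a"] by simp
  have g'nn: "0 \<le> g' s" for s unfolding g'_def using sg_pos[of "2 * s + a"] sg_lt1[of "2 * s + a"] by simp
  have g'le: "g' s \<le> 1" for s unfolding g'_def using sgd_le[of "2 * s + a"] by simp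
  have bg': "\<bar>g' s\<bar> \<le> 1" for s using g'nn[of s] g'le[of s] by simp
  define E where "E = (\<integral>x. g' (sdot d \<theta> x) \<partial>gauss d)"
  have M2i: "M2 d \<theta> pw i = \<theta> i * E" if i: "i < d" for i
  proof -
    have "M2 d \<theta> pw i = (\<integral>x. g (sdot d \<theta> x) * x i \<partial>gauss d)"
      unfolding M2_def W g_def using i by simp
    also have "\<dots> = \<theta> i * E" unfolding E_def by (rule coord_stein[OF der cont bg bg' i])
    finally show ?thesis .
  qed
  have vn: "vnorm d (M2 d \<theta> pw) = \<bar>E\<bar> * t"
  proof -
    have "(\<Sum>i<d. (M2 d \<theta> pw i)\<^sup>2) = E\<^sup>2 * (\<Sum>i<d. (\<theta> i)\<^sup>2)"
      by (simp add: M2i sum_distrib_left power_mult_distrib mult.commute)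
    then show ?thesis unfolding vnorm_def t_def by (simp add: real_sqrt_mult)
  qed
  have E0: "0 \<le> E" unfolding E_def by (intro integral_nonneg_AE AE_I2 g'nn)
  let ?ind = "\<lambda>x. (if sdot d \<theta> x \<le> 0 then 1 else 0::real)"
  define r where "r = (1 - 2 * pw)\<^sup>2"
  have r0: "0 \<le> r" unfolding r_def by simp
  have iind: "integrable (gauss d) ?ind" by (rule G.integrable_const_bound[where B=1]) auto
  have ig': "integrable (gauss d) (\<lambda>x. g' (sdot d \<theta> x))"
    by (rule G.integrable_const_bound[where B=1]) (auto intro: bg' measurable_compose[OF ms] borel_measurable_continuous_onI[OF cont])
  have pt: "g' (sdot d \<theta> x) \<le> 1 - r * ?ind x" for x
  proof (cases "sdot d \<theta> x \<le> 0")
    case True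
    have le: "sg (2 * sdot d \<theta> x + a) \<le> pw" using True sga sg_mono[of "2 * sdot d \<theta> x + a" a] by simp
    have "sg (2 * sdot d \<theta> x + a) * (1 - sg (2 * sdot d \<theta> x + a)) \<le> pw * (1 - pw)"
      using sgd_mono[OF le pw(2)] sg_pos[of "2 * sdot d \<theta> x + a"] by simp
    then have "g' (sdot d \<theta> x) \<le> 4 * (pw * (1 - pw))" unfolding g'_def by simp
    also have "4 * (pw * (1 - pw)) = 1 - r" unfolding r_def by (simp add: power2_eq_square algebra_simps)
    finally show ?thesis using True by simp
  next
    case False then show ?thesis using g'le by simp
  qed
  have "E \<le> (\<integral>x. 1 - r * ?ind x \<partial>gauss d)"
    unfolding E_def by (intro integral_mono ig' pt) (use iind in auto)
  also have "\<dots> = 1 - r * (\<integral>x. ?ind x \<partial>gauss d)"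
    using iind G.prob_space by (subst Bochner_Integration.integral_diff) auto
  also have "\<dots> \<le> 1 - r / 2"
  proof -
    have "r * (1/2) \<le> r * (\<integral>x. ?ind x \<partial>gauss d)" by (rule mult_left_mono[OF half_prob r0])
    then show ?thesis by linarith
  qed
  finally have Eb: "E \<le> 1 - r / 2" .
  have "vnorm d (M2 d \<theta> pw) = E * t" using vn E0 by simp
  also have "\<dots> \<le> (1 - r / 2) * t" using Eb t0 by (rule mult_right_mono)
  finally show ?thesis unfolding r_def t_def .
qed

theorem lemma6:
  shows "\<exists>c::real. 1/2 < c \<and> c < 1 \<and>
    (\<forall>d::nat. \<forall>\<theta>::nat \<Rightarrow> real. \<forall>pw::real.
       1 \<le> d \<and> 0 < pw \<and> pw \<le> 1/2 \<longrightarrow>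
       (let \<rho> = 1 - 2 * pw in
          \<bar>M1 d \<theta> pw - pw\<bar> \<le> (1 - c * \<rho>\<^sup>2) * vnorm d \<theta> / 2 \<and>
          vnorm d (M2 d \<theta> pw) \<le> (1 - \<rho>\<^sup>2 / 2) * vnorm d \<theta>))"
proof (intro exI[of _ "501/1000"] conjI allI impI)
  fix d :: nat and \<theta> :: "nat \<Rightarrow> real" and pw :: real
  assume H: "1 \<le> d \<and> 0 < pw \<and> pw \<le> 1/2"
  then have pw: "0 < pw" "pw \<le> 1/2" by auto
  show "let \<rho> = 1 - 2 * pw in
          \<bar>M1 d \<theta> pw - pw\<bar> \<le> (1 - 501/1000 * \<rho>\<^sup>2) * vnorm d \<theta> / 2 \<and>
          vnorm d (M2 d \<theta> pw) \<le> (1 - \<rho>\<^sup>2 / 2) * vnorm d \<theta>"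
    unfolding Let_def using M1_bound[OF pw] M2_bound[OF pw] by blast
qed simp_all


end
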